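(* For every positive integer $d$ there is a graph $G$ with boxicity $2$ and cubicity larger than $d$.
   Context: For a simple undirected graph $G$, the boxicity of $G$ is the smallest dimension $d$ such that $G$ is (isomorphic to) the intersection graph of a family of axis-aligned boxes in $\mathbb{R}^d$ (one box per vertex, two distinct vertices adjacent iff their boxes intersect). The cubicity of $G$ is the smallest dimension $d$ such that $G$ is the intersection graph of a family of axis-aligned hypercubes in $\mathbb{R}^d$, where the hypercubes may have arbitrary (not necessarily equal) side lengths. *)

theory Defs
  imports Complex_Main
begin

(* A finite simple undirected graph: finite vertex set V (vertices are naturals,
   which is no loss since every finite graph is isomorphic to one on naturals),
   adjacency relation E that is symmetric and irreflexive. *)
definition simple_graph :: "nat set \<Rightarrow> (nat \<Rightarrow> nat \<Rightarrow> bool) \<Rightarrow> bool" where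
  "simple_graph V E \<longleftrightarrow> finite V \<and> (\<forall>u v. E u v \<longrightarrow> E v u) \<and> (\<forall>v. \<not> E v v)"

(* R^d modelled as functions nat => real vanishing at coordinates >= d. *)
definition euclid :: "nat \<Rightarrow> (nat \<Rightarrow> real) set" where
  "euclid d = {x. \<forall>i\<ge>d. x i = 0}"

definition closed_box :: "nat \<Rightarrow> (nat \<Rightarrow> real) \<Rightarrow> (nat \<Rightarrow> real) \<Rightarrow> (nat \<Rightarrow> real) set" where
  "closed_box d lo hi = {x \<in> euclid d. \<forall>i<d. lo i \<le> x i \<and> x i \<le> hi i}"

definition is_box :: "nat \<Rightarrow> (nat \<Rightarrow> real) set \<Rightarrow> bool" where
  "is_box d B \<longleftrightarrow> (\<exists>lo hi. (\<forall>i<d. lo i \<le> hi i) \<and> B = closed_box d lo hi)"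

definition is_cube :: "nat \<Rightarrow> (nat \<Rightarrow> real) set \<Rightarrow> bool" where
  "is_cube d B \<longleftrightarrow> (\<exists>lo s. s \<ge> 0 \<and> B = closed_box d lo (\<lambda>i. lo i + s))"

definition intersection_rep :: "nat set \<Rightarrow> (nat \<Rightarrow> nat \<Rightarrow> bool) \<Rightarrow> (nat \<Rightarrow> (nat \<Rightarrow> real) set) \<Rightarrow> bool" where
  "intersection_rep V E f \<longleftrightarrow>
     (\<forall>u\<in>V. \<forall>v\<in>V. u \<noteq> v \<longrightarrow> (E u v \<longleftrightarrow> f u \<inter> f v \<noteq> {}))"

definition boxicity :: "nat set \<Rightarrow> (nat \<Rightarrow> nat \<Rightarrow> bool) \<Rightarrow> nat" where
  "boxicity V E = (LEAST d. \<exists>f. (\<forall>v\<in>V. is_box d (f v)) \<and> intersection_rep V E f)"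

definition cubicity :: "nat set \<Rightarrow> (nat \<Rightarrow> nat \<Rightarrow> bool) \<Rightarrow> nat" where
  "cubicity V E = (LEAST d. \<exists>f. (\<forall>v\<in>V. is_cube d (f v)) \<and> intersection_rep V E f)"

end

theory Submission
  imports Defs
begin

lemma box_inter:
  assumes "\<forall>i<D. lo1 i \<le> hi1 i" "\<forall>i<D. lo2 i \<le> hi2 i"
  shows "closed_box D lo1 hi1 \<inter> closed_box D lo2 hi2 \<noteq> {} \<longleftrightarrow>
         (\<forall>i<D. lo1 i \<le> hi2 i \<and> lo2 i \<le> hi1 i)"
proof
  assume "closed_box D lo1 hi1 \<inter> closed_box D lo2 hi2 \<noteq> {}"
  then obtain x where "x \<in> closed_box D lo1 hi1" "x \<in> closed_box D lo2 hi2" by blast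
  then show "\<forall>i<D. lo1 i \<le> hi2 i \<and> lo2 i \<le> hi1 i"
    unfolding closed_box_def by force
next
  assume h: "\<forall>i<D. lo1 i \<le> hi2 i \<and> lo2 i \<le> hi1 i"
  define x where "x = (\<lambda>i. if i < D then max (lo1 i) (lo2 i) else 0::real)"
  have "x \<in> closed_box D lo1 hi1 \<inter> closed_box D lo2 hi2"
    using h assms unfolding closed_box_def euclid_def x_def by auto
  then show "closed_box D lo1 hi1 \<inter> closed_box D lo2 hi2 \<noteq> {}" by blast
qed

definition GE :: "nat \<Rightarrow> nat \<Rightarrow> nat \<Rightarrow> bool" where
  "GE m u v \<longleftrightarrow> ((u < m) \<noteq> (v < m))"

lemma sg: "simple_graph {..<2*m} (GE m)"
  unfolding simple_graph_def GE_def by auto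

lemma no_box_small:
  assumes "m \<ge> 2" "D < 2" "\<forall>v\<in>{..<2*m}. is_box D (f v)" "intersection_rep {..<2*m} (GE m) f"
  shows False
proof -
  have "\<forall>v. \<exists>lo hi. v \<in> {..<2*m} \<longrightarrow> (\<forall>i<D. lo i \<le> hi i) \<and> f v = closed_box D lo hi"
    using assms(3) unfolding is_box_def by blast
  then obtain L H where LH: "\<And>v. v \<in> {..<2*m} \<Longrightarrow> (\<forall>i<D. L v i \<le> H v i) \<and> f v = closed_box D (L v) (H v)"
    by metis
  have I: "\<And>u v. u < 2*m \<Longrightarrow> v < 2*m \<Longrightarrow> u \<noteq> v \<Longrightarrow>
     GE m u v \<longleftrightarrow> (\<forall>i<D. L u i \<le> H v i \<and> L v i \<le> H u i)"
  proof -
    fix u v assume a: "u < 2*m" "v < 2*m" "u \<noteq> v"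
    then have "GE m u v \<longleftrightarrow> f u \<inter> f v \<noteq> {}" using assms(4) unfolding intersection_rep_def by auto
    also have "\<dots> \<longleftrightarrow> (\<forall>i<D. L u i \<le> H v i \<and> L v i \<le> H u i)"
      using LH[of u] LH[of v] a box_inter[of D "L u" "H u" "L v" "H v"] by auto
    finally show "GE m u v \<longleftrightarrow> (\<forall>i<D. L u i \<le> H v i \<and> L v i \<le> H u i)" .
  qed
  have m: "0 < 2*m" "1 < 2*m" "m < 2*m" "m+1 < 2*m" using assms(1) by auto
  have n01: "\<not> GE m 0 1" and nmm: "\<not> GE m m (m+1)" using assms(1) unfolding GE_def by auto
  have c: "GE m 0 m" "GE m 0 (m+1)" "GE m 1 m" "GE m 1 (m+1)" using assms(1) unfolding GE_def by auto
  show False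
  proof (cases "D = 0")
    case True
    then show ?thesis using I[OF m(1) m(2)] n01 by simp
  next
    case False
    then have D: "D = 1" using assms(2) by simp
    have e1: "\<not> (L 0 0 \<le> H 1 0 \<and> L 1 0 \<le> H 0 0)" using I[OF m(1) m(2)] n01 D by simp
    have e2: "\<not> (L m 0 \<le> H (m+1) 0 \<and> L (m+1) 0 \<le> H m 0)" using I[OF m(3) m(4)] nmm D by simp
    have c1: "L 0 0 \<le> H m 0 \<and> L m 0 \<le> H 0 0" using I[OF m(1) m(3)] c D assms(1) by simp
    have c2: "L 0 0 \<le> H (m+1) 0 \<and> L (m+1) 0 \<le> H 0 0" using I[OF m(1) m(4)] c D assms(1) by simp
    have c3: "L 1 0 \<le> H m 0 \<and> L m 0 \<le> H 1 0" using I[OF m(2) m(3)] c D assms(1) by simp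
    have c4: "L 1 0 \<le> H (m+1) 0 \<and> L (m+1) 0 \<le> H 1 0" using I[OF m(2) m(4)] c D assms(1) by simp
    have o: "\<And>v. v < 2*m \<Longrightarrow> L v 0 \<le> H v 0" using LH D by auto
    show False using e1 e2 c1 c2 c3 c4 o[OF m(1)] o[OF m(2)] o[OF m(3)] o[OF m(4)] by linarith
  qed
qed


lemma box2:
  assumes "m \<ge> 1"
  shows "\<exists>f. (\<forall>v\<in>{..<2*m}. is_box 2 (f v)) \<and> intersection_rep {..<2*m} (GE m) f"
proof -
  define L :: "nat \<Rightarrow> nat \<Rightarrow> real" where
    "L = (\<lambda>v k. if v < m then (if k = 0 then 0 else real v) else (if k = 0 then real (v - m) else 0))"
  define H :: "nat \<Rightarrow> nat \<Rightarrow> real" where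
    "H = (\<lambda>v k. if v < m then (if k = 0 then real m else real v) else (if k = 0 then real (v - m) else real m))"
  have o: "\<And>v. v < 2*m \<Longrightarrow> \<forall>i<2. L v i \<le> H v i" unfolding L_def H_def by auto
  define f where "f = (\<lambda>v. closed_box 2 (L v) (H v))"
  have "\<forall>v\<in>{..<2*m}. is_box 2 (f v)" unfolding is_box_def f_def using o by auto
  moreover have "intersection_rep {..<2*m} (GE m) f"
    unfolding intersection_rep_def
  proof (intro ballI impI)
    fix u v assume u: "u \<in> {..<2*m}" and v: "v \<in> {..<2*m}" and uv: "u \<noteq> v"
    have "f u \<inter> f v \<noteq> {} \<longleftrightarrow> (\<forall>i<2. L u i \<le> H v i \<and> L v i \<le> H u i)"
      unfolding f_def using box_inter o u v by auto
    also have "\<dots> \<longleftrightarrow> (L u 0 \<le> H v 0 \<and> L v 0 \<le> H u 0 \<and> L u 1 \<le> H v 1 \<and> L v 1 \<le> H u 1)"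
      by (auto simp: less_2_cases_iff)
    also have "\<dots> \<longleftrightarrow> GE m u v"
      using u v uv unfolding L_def H_def GE_def by auto
    finally show "GE m u v \<longleftrightarrow> f u \<inter> f v \<noteq> {}" by simp
  qed
  ultimately show ?thesis by blast
qed

lemma cube_exists:
  shows "\<exists>f. (\<forall>v\<in>{..<2*m}. is_cube (2*m) (f v)) \<and> intersection_rep {..<2*m} (GE m) f"
proof -
  define P :: "nat \<Rightarrow> nat \<Rightarrow> real" where
    "P = (\<lambda>v k. if v = k then 0 else if (v < m) = (k < m) then 3/2 else 3/4)"
  define f where "f = (\<lambda>v. closed_box (2*m) (P v) (\<lambda>i. P v i + 1))"
  have "\<forall>v\<in>{..<2*m}. is_cube (2*m) (f v)" unfolding is_cube_def f_def by (intro ballI exI[of _ "P _"] exI[of _ "1::real"]) simp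
  moreover have "intersection_rep {..<2*m} (GE m) f"
    unfolding intersection_rep_def
  proof (intro ballI impI)
    fix u v assume u: "u \<in> {..<2*m}" and v: "v \<in> {..<2*m}" and uv: "u \<noteq> v"
    have "f u \<inter> f v \<noteq> {} \<longleftrightarrow> (\<forall>i<2*m. P u i \<le> P v i + 1 \<and> P v i \<le> P u i + 1)"
      unfolding f_def by (rule box_inter) auto
    also have "\<dots> \<longleftrightarrow> GE m u v"
    proof
      assume h: "\<forall>i<2*m. P u i \<le> P v i + 1 \<and> P v i \<le> P u i + 1"
      show "GE m u v"
      proof (rule ccontr)
        assume "\<not> GE m u v"
        then have "P v u = 3/2" "P u u = 0" using uv unfolding GE_def P_def by auto
        then show False using h u by force
      qed
    next
      assume "GE m u v"
      then show "\<forall>i<2*m. P u i \<le> P v i + 1 \<and> P v i \<le> P u i + 1"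
        unfolding GE_def P_def by auto
    qed
    finally show "GE m u v \<longleftrightarrow> f u \<inter> f v \<noteq> {}" by simp
  qed
  ultimately show ?thesis by blast
qed


lemma no_cube:
  assumes "2^D < m" "\<forall>v\<in>{..<2*m}. is_cube D (f v)" "intersection_rep {..<2*m} (GE m) f"
  shows False
proof -
  have "\<forall>v. \<exists>lo s. v \<in> {..<2*m} \<longrightarrow> s \<ge> 0 \<and> f v = closed_box D lo (\<lambda>i. lo i + s)"
    using assms(2) unfolding is_cube_def by blast
  then obtain L S where LS: "\<And>v. v \<in> {..<2*m} \<Longrightarrow> S v \<ge> 0 \<and> f v = closed_box D (L v) (\<lambda>i. L v i + S v)"
    by metis
  have I: "\<And>u v. u < 2*m \<Longrightarrow> v < 2*m \<Longrightarrow> u \<noteq> v \<Longrightarrow>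
     GE m u v \<longleftrightarrow> (\<forall>i<D. L u i \<le> L v i + S v \<and> L v i \<le> L u i + S u)"
  proof -
    fix u v assume a: "u < 2*m" "v < 2*m" "u \<noteq> v"
    then have "GE m u v \<longleftrightarrow> f u \<inter> f v \<noteq> {}" using assms(3) unfolding intersection_rep_def by auto
    also have "\<dots> \<longleftrightarrow> (\<forall>i<D. L u i \<le> L v i + S v \<and> L v i \<le> L u i + S u)"
      using LS[of u] LS[of v] a box_inter[of D "L u" "\<lambda>i. L u i + S u" "L v" "\<lambda>i. L v i + S v"] by auto
    finally show "GE m u v \<longleftrightarrow> (\<forall>i<D. L u i \<le> L v i + S v \<and> L v i \<le> L u i + S u)" .
  qed
  have fin: "finite {..<2*m}" "{..<2*m} \<noteq> {}" using assms(1) by (auto simp: lessThan_empty_iff)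
  have "Min (S ` {..<2*m}) \<in> S ` {..<2*m}" using fin by (intro Min_in) auto
  then obtain v0 where v0a: "v0 \<in> {..<2*m}" "S v0 = Min (S ` {..<2*m})" by auto
  have v0: "v0 \<in> {..<2*m}" "\<And>w. w \<in> {..<2*m} \<Longrightarrow> S v0 \<le> S w"
    using v0a fin by auto
  define N where "N = (if v0 < m then {m..<2*m} else {..<m})"
  have Nsub: "\<And>w. w \<in> N \<Longrightarrow> w < 2*m \<and> w \<noteq> v0 \<and> GE m w v0"
    unfolding N_def GE_def by (auto split: if_splits)
  have Nsame: "\<And>w w'. w \<in> N \<Longrightarrow> w' \<in> N \<Longrightarrow> \<not> GE m w w'"
    unfolding N_def GE_def by (auto split: if_splits)
  have cardN: "card N = m" unfolding N_def by auto
  define p where "p = (\<lambda>w. {i. i < D \<and> L w i \<le> L v0 i})"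
  have inj: "inj_on p N"
  proof (rule inj_onI)
    fix w w' assume w: "w \<in> N" and w': "w' \<in> N" and eq: "p w = p w'"
    show "w = w'"
    proof (rule ccontr)
      assume ne: "w \<noteq> w'"
      have "GE m w w'"
      proof -
        have "\<forall>i<D. L w i \<le> L w' i + S w' \<and> L w' i \<le> L w i + S w"
        proof (intro allI impI)
          fix i assume i: "i < D"
          have a: "L w i \<le> L v0 i + S v0 \<and> L v0 i \<le> L w i + S w"
            using I[of w v0] Nsub[OF w] v0(1) i by auto
          have b: "L w' i \<le> L v0 i + S v0 \<and> L v0 i \<le> L w' i + S w'"
            using I[of w' v0] Nsub[OF w'] v0(1) i by auto
          have s: "S v0 \<le> S w" "S v0 \<le> S w'" using v0(2) Nsub w w' by auto
          have "(L w i \<le> L v0 i) = (L w' i \<le> L v0 i)"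
            using eq i unfolding p_def by (metis (mono_tags, lifting) mem_Collect_eq)
          then show "L w i \<le> L w' i + S w' \<and> L w' i \<le> L w i + S w"
            using a b s by (cases "L w i \<le> L v0 i") linarith+
        qed
        then show ?thesis using I[of w w'] Nsub w w' ne by auto
      qed
      then show False using Nsame w w' by blast
    qed
  qed
  have "p ` N \<subseteq> Pow {..<D}" unfolding p_def by auto
  then have "card N \<le> card (Pow {..<D})"
    using card_inj_on_le[OF inj] by auto
  then have "m \<le> 2^D" using cardN by (simp add: card_Pow)
  then show False using assms(1) by simp
qed

theorem theorem6:
  fixes d :: nat
  assumes "d \<ge> 1"
  shows "\<exists>V E. simple_graph V E \<and> boxicity V E = 2 \<and> cubicity V E > d"
proof -
  define m :: nat where "m = 2^d + 1"
  have m2: "m \<ge> 2" unfolding m_def using assms by simp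
  have b: "boxicity {..<2*m} (GE m) = 2"
    unfolding boxicity_def
  proof (rule Least_equality)
    show "\<exists>f. (\<forall>v\<in>{..<2*m}. is_box 2 (f v)) \<and> intersection_rep {..<2*m} (GE m) f"
      using box2 m2 by simp
  next
    fix y assume "\<exists>f. (\<forall>v\<in>{..<2*m}. is_box y (f v)) \<and> intersection_rep {..<2*m} (GE m) f"
    then show "2 \<le> y" using no_box_small[OF m2] by (metis not_le)
  qed
  let ?Q = "\<lambda>D. \<exists>f. (\<forall>v\<in>{..<2*m}. is_cube D (f v)) \<and> intersection_rep {..<2*m} (GE m) f"
  have ex: "?Q (2*m)" using cube_exists by simp
  have big: "\<And>D. ?Q D \<Longrightarrow> d < D"
  proof -
    fix D assume q: "?Q D"
    show "d < D"
    proof (rule ccontr)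
      assume "\<not> d < D"
      then have "(2::nat)^D \<le> 2^d" by (simp add: power_increasing)
      then have "2^D < m" unfolding m_def by (simp add: less_Suc_eq_le)
      then show False using q no_cube by blast
    qed
  qed
  have "d < cubicity {..<2*m} (GE m)"
    unfolding cubicity_def by (rule big, rule LeastI[of ?Q, OF ex])
  then show ?thesis using b sg by blast
qed

end
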